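(* Assume $A$ is finite, each $f_a$ is differentiable on $(0,1]$ with $f_a'>0$, $\phi_a=1/f_a'$. Let $\mathcal D_0\subseteq\mathcal D$ be open, $\theta\in\mathcal D_0$, and assume $\alpha$ and each $p_{\cdot,a}$ are differentiable at $\theta$ with $\sum_a\partial p_{\theta,a}/\partial\theta_j=0$, and that $g_{i,j}(\theta)$ exists. Then for all $i,j$, $$I_{i,j}(\theta)=z(\theta)\,g_{i,j}(\theta)=z(\theta)^2\,\sigma_{i,j}(\theta).$$
   Context: Let $A$ be a finite set, $\mathcal M_1^+(A)$ the probability distributions on $A$. For each $a$, $h_a:[0,1]\to\mathbb R$ is continuous, strictly concave, $h_a(0)=h_a(1)=0$, differentiable on $(0,1)$ with $h_a'=-f_a$; $I(p)=\sum_ah_a(p_a)$. $H_1,\dots,H_n:A\to\mathbb R$, $\langle p,X\rangle=\sum_ap_aX(a)$. $p^*$ satisfies the variational principle with parameters $\theta\in\mathbb R^n$ if $+\infty>I(p^* )-\sum_j\theta_j\langle p^*,H_j\rangle\ge I(p)-\sum_j\theta_j\langle p,H_j\rangle$ for all $p$. $\mathcal D$ is the set of $\theta$ for which such $p^*$ exists; it is unique, denoted $p_\theta$, and there is $\alpha(\theta)\in\mathbb R$ with $f_a(p_{\theta,a})=-\alpha(\theta)-\sum_j\theta_jH_j(a)$ whenever $p_{\theta,a}>0$. Massieu function: $\Phi(\theta)=I(p_\theta)-\sum_j\theta_j\langle p_\theta,H_j\rangle$; metric tensor $g_{i,j}(\theta)=\partial^2\Phi/\partial\theta_i\partial\theta_j$.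 Let $z(\theta)=\sum_{a:p_{\theta,a}>0}\phi_a(p_{\theta,a})$ and escort distribution $P_{\theta,a}=\phi_a(p_{\theta,a})/z(\theta)$ if $p_{\theta,a}>0$, $P_{\theta,a}=0$ otherwise. Score variables $X_{i,a}(\theta)=\frac1{P_{\theta,a}}\frac{\partial}{\partial\theta_i}p_{\theta,a}$ (for $P_{\theta,a}>0$); generalised Fisher information $I_{i,j}(\theta)=\sum_{a:P_{\theta,a}>0}P_{\theta,a}X_{i,a}(\theta)X_{j,a}(\theta)$; covariance $\sigma_{i,j}(\theta)=\langle P_\theta,H_iH_j\rangle-\langle P_\theta,H_i\rangle\langle P_\theta,H_j\rangle$. *)

theory Defs
  imports "HOL-Analysis.Analysis"
begin

definition strictly_concave_on :: "real set \<Rightarrow> (real \<Rightarrow> real) \<Rightarrow> bool" where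
  "strictly_concave_on S g \<longleftrightarrow>
     (\<forall>x\<in>S. \<forall>y\<in>S. \<forall>t. x \<noteq> y \<and> 0 < t \<and> t < 1 \<longrightarrow>
        (1 - t) * g x + t * g y < g ((1 - t) * x + t * y))"

definition prob_dists :: "('a::finite \<Rightarrow> real) set" where
  "prob_dists = {p. (\<forall>a. 0 \<le> p a) \<and> (\<Sum>a\<in>UNIV. p a) = 1}"

definition entropyI :: "('a::finite \<Rightarrow> real \<Rightarrow> real) \<Rightarrow> ('a \<Rightarrow> real) \<Rightarrow> real" where
  "entropyI h p = (\<Sum>a\<in>UNIV. h a (p a))"

definition pairing :: "('a::finite \<Rightarrow> real) \<Rightarrow> ('a \<Rightarrow> real) \<Rightarrow> real" where
  "pairing p X = (\<Sum>a\<in>UNIV. p a * X a)"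

definition vp_obj :: "('a::finite \<Rightarrow> real \<Rightarrow> real) \<Rightarrow> ('n::finite \<Rightarrow> 'a \<Rightarrow> real)
    \<Rightarrow> real^'n \<Rightarrow> ('a \<Rightarrow> real) \<Rightarrow> real" where
  "vp_obj h H \<theta> p = entropyI h p - (\<Sum>j\<in>UNIV. \<theta> $ j * pairing p (H j))"

definition var_principle :: "('a::finite \<Rightarrow> real \<Rightarrow> real) \<Rightarrow> ('n::finite \<Rightarrow> 'a \<Rightarrow> real)
    \<Rightarrow> real^'n \<Rightarrow> ('a \<Rightarrow> real) \<Rightarrow> bool" where
  "var_principle h H \<theta> ps \<longleftrightarrow>
     ps \<in> prob_dists \<and> (\<forall>p\<in>prob_dists. vp_obj h H \<theta> p \<le> vp_obj h H \<theta> ps)"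

definition domD :: "('a::finite \<Rightarrow> real \<Rightarrow> real) \<Rightarrow> ('n::finite \<Rightarrow> 'a \<Rightarrow> real) \<Rightarrow> (real^'n) set" where
  "domD h H = {\<theta>. \<exists>p. var_principle h H \<theta> p}"

definition ptheta :: "('a::finite \<Rightarrow> real \<Rightarrow> real) \<Rightarrow> ('n::finite \<Rightarrow> 'a \<Rightarrow> real)
    \<Rightarrow> real^'n \<Rightarrow> 'a \<Rightarrow> real" where
  "ptheta h H \<theta> = (THE p. var_principle h H \<theta> p)"

definition alpha :: "('a::finite \<Rightarrow> real \<Rightarrow> real) \<Rightarrow> ('a \<Rightarrow> real \<Rightarrow> real) \<Rightarrow> ('n::finite \<Rightarrow> 'a \<Rightarrow> real)
    \<Rightarrow> real^'n \<Rightarrow> real" where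
  "alpha h f H \<theta> = (THE c. \<forall>a. ptheta h H \<theta> a > 0 \<longrightarrow>
       f a (ptheta h H \<theta> a) = - c - (\<Sum>j\<in>UNIV. \<theta> $ j * H j a))"

definition massieu :: "('a::finite \<Rightarrow> real \<Rightarrow> real) \<Rightarrow> ('n::finite \<Rightarrow> 'a \<Rightarrow> real) \<Rightarrow> real^'n \<Rightarrow> real" where
  "massieu h H \<theta> = vp_obj h H \<theta> (ptheta h H \<theta>)"

definition partial_deriv :: "(real^'n \<Rightarrow> real) \<Rightarrow> 'n::finite \<Rightarrow> real^'n \<Rightarrow> real" where
  "partial_deriv F i \<theta> = deriv (\<lambda>t. F (\<theta> + t *\<^sub>R axis i 1)) 0"

definition has_partial :: "(real^'n \<Rightarrow> real) \<Rightarrow> 'n::finite \<Rightarrow> real^'n \<Rightarrow> bool" where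
  "has_partial F i \<theta> \<longleftrightarrow> (\<lambda>t. F (\<theta> + t *\<^sub>R axis i 1)) differentiable (at 0)"

definition metric_g :: "('a::finite \<Rightarrow> real \<Rightarrow> real) \<Rightarrow> ('n::finite \<Rightarrow> 'a \<Rightarrow> real)
    \<Rightarrow> real^'n \<Rightarrow> 'n \<Rightarrow> 'n \<Rightarrow> real" where
  "metric_g h H \<theta> i j = partial_deriv (partial_deriv (massieu h H) j) i \<theta>"

definition metric_g_exists :: "('a::finite \<Rightarrow> real \<Rightarrow> real) \<Rightarrow> ('n::finite \<Rightarrow> 'a \<Rightarrow> real)
    \<Rightarrow> real^'n \<Rightarrow> 'n \<Rightarrow> 'n \<Rightarrow> bool" where
  "metric_g_exists h H \<theta> i j \<longleftrightarrow>
     (\<forall>\<^sub>F \<theta>' in nhds \<theta>. has_partial (massieu h H) j \<theta>') \<and>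
     has_partial (partial_deriv (massieu h H) j) i \<theta>"

text \<open>\<open>\<phi>_a = 1/f_a'\<close>, where \<open>df a\<close> is the derivative of \<open>f a\<close>.\<close>
definition phi :: "('a \<Rightarrow> real \<Rightarrow> real) \<Rightarrow> 'a \<Rightarrow> real \<Rightarrow> real" where
  "phi df a x = 1 / df a x"

definition zfun :: "('a::finite \<Rightarrow> real \<Rightarrow> real) \<Rightarrow> ('a \<Rightarrow> real \<Rightarrow> real) \<Rightarrow> ('n::finite \<Rightarrow> 'a \<Rightarrow> real)
    \<Rightarrow> real^'n \<Rightarrow> real" where
  "zfun h df H \<theta> = (\<Sum>a\<in>{a. ptheta h H \<theta> a > 0}. phi df a (ptheta h H \<theta> a))"

definition escort :: "('a::finite \<Rightarrow> real \<Rightarrow> real) \<Rightarrow> ('a \<Rightarrow> real \<Rightarrow> real) \<Rightarrow> ('n::finite \<Rightarrow> 'a \<Rightarrow> real)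
    \<Rightarrow> real^'n \<Rightarrow> 'a \<Rightarrow> real" where
  "escort h df H \<theta> a =
     (if ptheta h H \<theta> a > 0 then phi df a (ptheta h H \<theta> a) / zfun h df H \<theta> else 0)"

definition score :: "('a::finite \<Rightarrow> real \<Rightarrow> real) \<Rightarrow> ('a \<Rightarrow> real \<Rightarrow> real) \<Rightarrow> ('n::finite \<Rightarrow> 'a \<Rightarrow> real)
    \<Rightarrow> real^'n \<Rightarrow> 'n \<Rightarrow> 'a \<Rightarrow> real" where
  "score h df H \<theta> i a =
     partial_deriv (\<lambda>\<theta>'. ptheta h H \<theta>' a) i \<theta> / escort h df H \<theta> a"

definition fisher :: "('a::finite \<Rightarrow> real \<Rightarrow> real) \<Rightarrow> ('a \<Rightarrow> real \<Rightarrow> real) \<Rightarrow> ('n::finite \<Rightarrow> 'a \<Rightarrow> real)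
    \<Rightarrow> real^'n \<Rightarrow> 'n \<Rightarrow> 'n \<Rightarrow> real" where
  "fisher h df H \<theta> i j =
     (\<Sum>a\<in>{a. escort h df H \<theta> a > 0}.
        escort h df H \<theta> a * score h df H \<theta> i a * score h df H \<theta> j a)"

definition covar :: "('a::finite \<Rightarrow> real \<Rightarrow> real) \<Rightarrow> ('a \<Rightarrow> real \<Rightarrow> real) \<Rightarrow> ('n::finite \<Rightarrow> 'a \<Rightarrow> real)
    \<Rightarrow> real^'n \<Rightarrow> 'n \<Rightarrow> 'n \<Rightarrow> real" where
  "covar h df H \<theta> i j =
     pairing (escort h df H \<theta>) (\<lambda>a. H i a * H j a)
     - pairing (escort h df H \<theta>) (H i) * pairing (escort h df H \<theta>) (H j)"

end

theory Submission
  imports Defs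
begin

lemma prob_bounds:
  assumes "p \<in> prob_dists" shows "0 \<le> p a" "p a \<le> (1::real)"
proof -
  show "0 \<le> p a" using assms by (auto simp: prob_dists_def)
  have "p a = (\<Sum>c\<in>{a}. p c)" by simp
  also have "\<dots> \<le> (\<Sum>c\<in>UNIV. p c)"
    by (rule sum_mono2) (use assms in \<open>auto simp: prob_dists_def\<close>)
  finally show "p a \<le> 1" using assms by (simp add: prob_dists_def)
qed

lemma dot_shift:
  fixes \<theta> :: "real^'n::finite"
  shows "(\<Sum>k\<in>UNIV. (\<theta> + t *\<^sub>R axis i 1) $ k * H k a) = (\<Sum>k\<in>UNIV. \<theta> $ k * H k a) + t * H i a"
proof -
  have "\<And>k. (\<theta> + t *\<^sub>R axis i 1) $ k * H k a = \<theta> $ k * H k a + (if k = i then t * H i a else 0)"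
    by (simp add: axis_def distrib_right)
  thus ?thesis by (simp add: sum.distrib)
qed

lemma vp_obj_shift:
  fixes \<theta> :: "real^'n::finite"
  shows "vp_obj h H (\<theta> + t *\<^sub>R axis j 1) q = vp_obj h H \<theta> q - t * pairing q (H j)"
proof -
  have "\<And>k. (\<theta> + t *\<^sub>R axis j 1) $ k * pairing q (H k) = \<theta> $ k * pairing q (H k) + (if k = j then t * pairing q (H j) else 0)"
    by (simp add: axis_def distrib_right)
  thus ?thesis by (simp add: vp_obj_def sum.distrib)
qed

lemma diff_line:
  fixes F :: "real^'n::finite \<Rightarrow> real"
  assumes "F differentiable (at \<theta>)"
  shows "(\<lambda>t::real. F (\<theta> + t *\<^sub>R v)) differentiable (at 0)"
proof -
  have "(\<lambda>t::real. \<theta> + t *\<^sub>R v) differentiable (at 0)"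
    by (intro derivative_intros)
  moreover have "F differentiable (at ((\<lambda>t::real. \<theta> + t *\<^sub>R v) 0))" using assms by simp
  ultimately have "(F \<circ> (\<lambda>t::real. \<theta> + t *\<^sub>R v)) differentiable (at 0)"
    by (rule differentiable_chain_at)
  thus ?thesis by (simp add: o_def)
qed


lemma vp_unique:
  fixes h :: "'a::finite \<Rightarrow> real \<Rightarrow> real" and H :: "'n::finite \<Rightarrow> 'a \<Rightarrow> real"
  assumes h_conc: "\<And>a. strictly_concave_on {0..1} (h a)"
    and vp: "var_principle h H \<theta> p" and vq: "var_principle h H \<theta> q"
  shows "p = q"
proof (rule ccontr)
  assume ne: "p \<noteq> q"
  have pP: "p \<in> prob_dists" and qP: "q \<in> prob_dists" using vp vq by (auto simp: var_principle_def)
  define m where "m = (\<lambda>a. (1 - 1/2) * p a + (1/2) * q a)"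
  have mP: "m \<in> prob_dists" using pP qP
    by (auto simp: prob_dists_def m_def sum.distrib sum_divide_distrib[symmetric])
  have le1: "\<And>a. (1 - 1/2) * h a (p a) + (1/2) * h a (q a) \<le> h a (m a)"
  proof -
    fix a show "(1 - 1/2) * h a (p a) + (1/2) * h a (q a) \<le> h a (m a)"
    proof (cases "p a = q a")
      case True thus ?thesis by (simp add: m_def algebra_simps)
    next
      case False
      have "p a \<in> {0..1}" "q a \<in> {0..1}" using prob_bounds[OF pP] prob_bounds[OF qP] by auto
      with h_conc[of a] False show ?thesis unfolding strictly_concave_on_def m_def
        by (metis less_eq_real_def field_sum_of_halves half_gt_zero_iff zero_less_one
             less_add_same_cancel1)
    qed
  qed
  obtain a0 where a0: "p a0 \<noteq> q a0" using ne by auto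
  have lt1: "(1 - 1/2) * h a0 (p a0) + (1/2) * h a0 (q a0) < h a0 (m a0)"
  proof -
    have "p a0 \<in> {0..1}" "q a0 \<in> {0..1}" using prob_bounds[OF pP] prob_bounds[OF qP] by auto
    with h_conc[of a0] a0 have "(1 - 1/2) * h a0 (p a0) + (1/2) * h a0 (q a0) < h a0 ((1 - 1/2) * p a0 + (1/2) * q a0)"
      unfolding strictly_concave_on_def by (elim ballE allE[where x="1/2"]) auto
    thus ?thesis by (simp add: m_def)
  qed
  have E: "(1 - 1/2) * entropyI h p + (1/2) * entropyI h q < entropyI h m"
    unfolding entropyI_def sum_distrib_left sum.distrib[symmetric]
    by (rule sum_strict_mono_ex1) (use le1 lt1 in auto)
  have Pm: "pairing m X = (1 - 1/2) * pairing p X + (1/2) * pairing q X" for X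
    by (simp add: pairing_def m_def sum_distrib_left sum.distrib algebra_simps)
  have "(\<Sum>j\<in>UNIV. \<theta> $ j * pairing m (H j)) = (1 - 1/2) * (\<Sum>j\<in>UNIV. \<theta> $ j * pairing p (H j)) + (1/2) * (\<Sum>j\<in>UNIV. \<theta> $ j * pairing q (H j))"
    by (simp add: Pm sum_distrib_left sum.distrib algebra_simps)
  hence "(1 - 1/2) * vp_obj h H \<theta> p + (1/2) * vp_obj h H \<theta> q < vp_obj h H \<theta> m"
    using E by (simp add: vp_obj_def algebra_simps)
  moreover have "vp_obj h H \<theta> m \<le> vp_obj h H \<theta> p" using vp mP by (auto simp: var_principle_def)
  moreover have "vp_obj h H \<theta> p = vp_obj h H \<theta> q" using vp vq pP qP
    by (auto simp: var_principle_def intro: antisym)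
  ultimately show False by simp
qed

lemma vp_ptheta:
  fixes h :: "'a::finite \<Rightarrow> real \<Rightarrow> real" and H :: "'n::finite \<Rightarrow> 'a \<Rightarrow> real"
  assumes h_conc: "\<And>a. strictly_concave_on {0..1} (h a)"
    and "\<theta> \<in> domD h H"
  shows "var_principle h H \<theta> (ptheta h H \<theta>)"
proof -
  obtain p where p: "var_principle h H \<theta> p" using assms(2) by (auto simp: domD_def)
  show ?thesis unfolding ptheta_def
  proof (rule theI[of _ p])
    show "var_principle h H \<theta> p" by (rule p)
    fix x assume "var_principle h H \<theta> x"
    from vp_unique[OF h_conc p this] show "x = p" by (rule sym)
  qed
qed


lemma pair_le1:
  assumes "p \<in> prob_dists" "a \<noteq> b" shows "p a + p b \<le> (1::real)"
proof -
  have "p a + p b = (\<Sum>c\<in>{a,b}. p c)" using assms(2) by simp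
  also have "\<dots> \<le> (\<Sum>c\<in>UNIV. p c)"
    by (rule sum_mono2) (use assms in \<open>auto simp: prob_dists_def\<close>)
  finally show ?thesis using assms by (simp add: prob_dists_def)
qed

lemma kkt:
  fixes h f :: "'a::finite \<Rightarrow> real \<Rightarrow> real" and H :: "'n::finite \<Rightarrow> 'a \<Rightarrow> real"
  assumes h_deriv: "\<And>a x. x \<in> {0<..<1} \<Longrightarrow> (h a has_real_derivative - f a x) (at x)"
    and vp: "var_principle h H \<theta> p" and ab: "a \<noteq> b" and pa: "p a > 0" and pb: "p b > 0"
  shows "f a (p a) + (\<Sum>k\<in>UNIV. \<theta> $ k * H k a) = f b (p b) + (\<Sum>k\<in>UNIV. \<theta> $ k * H k b)"
proof -
  have pP: "p \<in> prob_dists" using vp by (simp add: var_principle_def)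
  have s1: "p a + p b \<le> 1" by (rule pair_le1[OF pP ab])
  have pa1: "p a \<in> {0<..<1}" using pa pb s1 by auto
  have pb1: "p b \<in> {0<..<1}" using pa pb s1 by auto
  define q where "q t = (\<lambda>c. p c + (if c = a then t else 0) - (if c = b then t else 0))" for t :: real
  define d where "d = min (p a) (p b)"
  have d0: "d > 0" using pa pb by (simp add: d_def)
  have qP: "q t \<in> prob_dists" if "\<bar>t\<bar> < d" for t
  proof -
    have "0 \<le> q t c" for c
      using that prob_bounds(1)[OF pP, of c] ab by (auto simp: q_def d_def)
    moreover have "(\<Sum>c\<in>UNIV. q t c) = 1"
      using pP by (simp add: q_def sum.distrib sum_subtractf prob_dists_def)
    ultimately show ?thesis by (simp add: prob_dists_def)
  qed
  have q0: "q 0 = p" by (simp add: q_def)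
  define G where "G t = vp_obj h H \<theta> (q t)" for t
  have Gle: "\<forall>y. \<bar>0 - y\<bar> < d \<longrightarrow> G y \<le> G 0"
    using vp qP q0 by (auto simp: G_def var_principle_def)
  have pq: "pairing (q t) (H j) = pairing p (H j) + t * (H j a - H j b)" for t j
  proof -
    have e: "\<And>c. q t c * H j c = p c * H j c + (if c = a then t * H j a else 0) - (if c = b then t * H j b else 0)"
      by (simp add: q_def algebra_simps)
    have "pairing (q t) (H j) = (\<Sum>c\<in>UNIV. p c * H j c + (if c = a then t * H j a else 0) - (if c = b then t * H j b else 0))"
      unfolding pairing_def by (rule sum.cong[OF refl], rule e)
    also have "\<dots> = pairing p (H j) + t * (H j a - H j b)"
      by (simp only: sum.distrib sum_subtractf pairing_def) (simp add: algebra_simps)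
    finally show ?thesis .
  qed
  have Geq: "G t = (\<Sum>c\<in>UNIV. h c (q t c)) - (\<Sum>j\<in>UNIV. \<theta> $ j * (pairing p (H j) + t * (H j a - H j b)))" for t
    by (simp add: G_def vp_obj_def entropyI_def pq)
  define dc where "dc c = (if c = a then - f a (p a) else if c = b then f b (p b) else 0)" for c
  have dh: "((\<lambda>t. h c (q t c)) has_real_derivative dc c) (at 0)" for c
  proof (cases "c = a")
    case True
    have "((\<lambda>t. h a (p a + t)) has_real_derivative (- f a (p a)) * 1) (at 0)"
      by (rule DERIV_chain2[where f="h a" and g="\<lambda>t. p a + t"]) (use h_deriv[OF pa1] in \<open>auto intro!: derivative_eq_intros\<close>)
    thus ?thesis using True ab by (simp add: q_def dc_def)
  next
    case ca: False
    show ?thesis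
    proof (cases "c = b")
      case True
      have "((\<lambda>t. h b (p b - t)) has_real_derivative (- f b (p b)) * (-1)) (at 0)"
        by (rule DERIV_chain2[where f="h b" and g="\<lambda>t. p b - t"]) (use h_deriv[OF pb1] in \<open>auto intro!: derivative_eq_intros\<close>)
      thus ?thesis using True ab by (simp add: q_def dc_def)
    next
      case False
      thus ?thesis using ca by (simp add: q_def dc_def)
    qed
  qed
  have "(G has_real_derivative (\<Sum>c\<in>UNIV. dc c) - (\<Sum>j\<in>UNIV. \<theta> $ j * (H j a - H j b))) (at 0)"
    unfolding Geq[abs_def]
    by (rule derivative_eq_intros DERIV_sum dh)+ (auto intro!: derivative_eq_intros)
  from DERIV_local_max[OF this d0 Gle]
  have "(\<Sum>c\<in>UNIV. dc c) = (\<Sum>j\<in>UNIV. \<theta> $ j * (H j a - H j b))" by simp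
  moreover have "(\<Sum>c\<in>UNIV. dc c) = - f a (p a) + f b (p b)"
  proof -
    have "\<And>c. dc c = (if c = a then - f a (p a) else 0) + (if c = b then f b (p b) else 0)"
      using ab by (simp add: dc_def)
    thus ?thesis by (simp add: sum.distrib)
  qed
  ultimately show ?thesis by (simp add: algebra_simps sum_subtractf)
qed


lemma norm_axis1: "norm (t *\<^sub>R (axis i (1::real) :: real^'n::finite)) = \<bar>t\<bar>"
  by simp

lemma ball_line:
  fixes \<theta> :: "real^'n::finite"
  assumes "open D0" "\<theta> \<in> D0"
  obtains e where "e > 0" "\<And>t. \<bar>t\<bar> < e \<Longrightarrow> \<theta> + t *\<^sub>R axis i 1 \<in> D0"
proof -
  obtain e where e: "e > 0" "ball \<theta> e \<subseteq> D0" using assms openE by blast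
  have "\<theta> + t *\<^sub>R axis i 1 \<in> D0" if "\<bar>t\<bar> < e" for t
  proof -
    have "dist \<theta> (\<theta> + t *\<^sub>R axis i 1) = \<bar>t\<bar>" by (simp add: dist_norm norm_axis1)
    thus ?thesis using that e by auto
  qed
  thus ?thesis using that e by blast
qed

lemma envelope:
  fixes h :: "'a::finite \<Rightarrow> real \<Rightarrow> real" and H :: "'n::finite \<Rightarrow> 'a \<Rightarrow> real"
  assumes vpD: "\<And>\<theta>'. \<theta>' \<in> D0 \<Longrightarrow> var_principle h H \<theta>' (ptheta h H \<theta>')"
    and oD: "open D0" and th: "\<theta> \<in> D0" and hp: "has_partial (massieu h H) j \<theta>"
  shows "partial_deriv (massieu h H) j \<theta> = - pairing (ptheta h H \<theta>) (H j)"
proof -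
  obtain e where e: "e > 0" "\<And>t. \<bar>t\<bar> < e \<Longrightarrow> \<theta> + t *\<^sub>R axis j 1 \<in> D0"
    using ball_line[OF oD th] by blast
  define F where "F t = massieu h H (\<theta> + t *\<^sub>R axis j 1)" for t
  define c where "c = pairing (ptheta h H \<theta>) (H j)"
  have "F differentiable (at 0)" using hp by (simp add: has_partial_def F_def[abs_def])
  hence dF: "(F has_real_derivative deriv F 0) (at 0)" by (simp add: DERIV_deriv_iff_real_differentiable)
  have dG: "((\<lambda>t. F t + t * c) has_real_derivative deriv F 0 + c) (at 0)"
    using dF by (auto intro!: derivative_eq_intros)
  have "\<forall>y. \<bar>0 - y\<bar> < e \<longrightarrow> F 0 + 0 * c \<le> F y + y * c"
  proof (intro allI impI)
    fix y :: real assume "\<bar>0 - y\<bar> < e"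
    hence yD: "\<theta> + y *\<^sub>R axis j 1 \<in> D0" using e by auto
    have pP: "ptheta h H \<theta> \<in> prob_dists" using vpD[OF th] by (simp add: var_principle_def)
    have "vp_obj h H (\<theta> + y *\<^sub>R axis j 1) (ptheta h H \<theta>) \<le> F y"
      using vpD[OF yD] pP by (simp add: var_principle_def F_def massieu_def)
    moreover have "F 0 = vp_obj h H \<theta> (ptheta h H \<theta>)" by (simp add: F_def massieu_def)
    ultimately show "F 0 + 0 * c \<le> F y + y * c" by (simp add: vp_obj_shift c_def)
  qed
  from DERIV_local_min[OF dG e(1) this] have "deriv F 0 = - c" by simp
  thus ?thesis by (simp add: partial_deriv_def F_def[abs_def] c_def)
qed

lemma zero_deriv:
  fixes h :: "'a::finite \<Rightarrow> real \<Rightarrow> real" and H :: "'n::finite \<Rightarrow> 'a \<Rightarrow> real"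
  assumes vpD: "\<And>\<theta>'. \<theta>' \<in> D0 \<Longrightarrow> var_principle h H \<theta>' (ptheta h H \<theta>')"
    and oD: "open D0" and th: "\<theta> \<in> D0" and z: "ptheta h H \<theta> a = 0"
    and pd: "(\<lambda>\<theta>'. ptheta h H \<theta>' a) differentiable (at \<theta>)"
  shows "partial_deriv (\<lambda>\<theta>'. ptheta h H \<theta>' a) i \<theta> = 0"
proof -
  obtain e where e: "e > 0" "\<And>t. \<bar>t\<bar> < e \<Longrightarrow> \<theta> + t *\<^sub>R axis i 1 \<in> D0"
    using ball_line[OF oD th] by blast
  define F where "F t = ptheta h H (\<theta> + t *\<^sub>R axis i 1) a" for t
  have "F differentiable (at 0)" unfolding F_def by (rule diff_line[OF pd])
  hence dF: "(F has_real_derivative deriv F 0) (at 0)" by (simp add: DERIV_deriv_iff_real_differentiable)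
  have "\<forall>y. \<bar>0 - y\<bar> < e \<longrightarrow> F 0 \<le> F y"
  proof (intro allI impI)
    fix y :: real assume "\<bar>0 - y\<bar> < e"
    hence yD: "\<theta> + y *\<^sub>R axis i 1 \<in> D0" using e by auto
    have "ptheta h H (\<theta> + y *\<^sub>R axis i 1) \<in> prob_dists" using vpD[OF yD] by (simp add: var_principle_def)
    thus "F 0 \<le> F y" using z by (simp add: F_def prob_dists_def)
  qed
  from DERIV_local_min[OF dF e(1) this] show ?thesis by (simp add: partial_deriv_def F_def[abs_def])
qed


lemma ev_nhds_from_at:
  assumes "eventually P (at (x::real))" "P x" shows "eventually P (nhds x)"
proof -
  have "eventually (\<lambda>y. y \<noteq> x \<longrightarrow> y \<in> UNIV \<longrightarrow> P y) (nhds x)"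
    using assms(1) by (simp add: eventually_at_filter)
  thus ?thesis by (rule eventually_mono) (use assms(2) in auto)
qed

lemma line_deriv:
  fixes F :: "real^'n::finite \<Rightarrow> real"
  assumes "F differentiable (at \<theta>)"
  shows "((\<lambda>t. F (\<theta> + t *\<^sub>R axis i 1)) has_real_derivative partial_deriv F i \<theta>) (at 0)"
  using diff_line[OF assms] by (simp add: partial_deriv_def DERIV_deriv_iff_real_differentiable)

lemma ev_pos:
  fixes F :: "real^'n::finite \<Rightarrow> real"
  assumes "F differentiable (at \<theta>)" "F \<theta> > 0"
  shows "eventually (\<lambda>t. F (\<theta> + t *\<^sub>R axis i 1) > 0) (nhds 0)"
proof -
  have "isCont (\<lambda>t. F (\<theta> + t *\<^sub>R axis i 1)) 0"
    using line_deriv[OF assms(1)] by (rule DERIV_isCont)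
  hence "((\<lambda>t. F (\<theta> + t *\<^sub>R axis i 1)) \<longlongrightarrow> F \<theta>) (at 0)"
    by (simp add: isCont_def)
  hence "eventually (\<lambda>t. F (\<theta> + t *\<^sub>R axis i 1) > 0) (at 0)"
    using assms(2) by (rule order_tendstoD(1))
  thus ?thesis by (rule ev_nhds_from_at) (use assms(2) in simp)
qed

lemma ev_D0:
  fixes \<theta> :: "real^'n::finite"
  assumes "open D0" "\<theta> \<in> D0"
  shows "eventually (\<lambda>t. \<theta> + t *\<^sub>R axis i 1 \<in> D0) (nhds 0)"
proof -
  obtain e where e: "e > 0" "\<And>t. \<bar>t\<bar> < e \<Longrightarrow> \<theta> + t *\<^sub>R axis i 1 \<in> D0"
    using ball_line[OF assms] by blast
  show ?thesis unfolding eventually_nhds_metric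
    by (rule exI[of _ e]) (use e in \<open>auto simp: dist_real_def\<close>)
qed

lemma supp_rel:
  fixes h f df :: "'a::finite \<Rightarrow> real \<Rightarrow> real" and H :: "'n::finite \<Rightarrow> 'a \<Rightarrow> real"
  assumes h_deriv: "\<And>a x. x \<in> {0<..<1} \<Longrightarrow> (h a has_real_derivative - f a x) (at x)"
    and f_deriv: "\<And>a x. x \<in> {0<..1} \<Longrightarrow> (f a has_real_derivative df a x) (at x within {0<..1})"
    and vpD: "\<And>\<theta>'. \<theta>' \<in> D0 \<Longrightarrow> var_principle h H \<theta>' (ptheta h H \<theta>')"
    and oD: "open D0" and th: "\<theta> \<in> D0" and ab: "a \<noteq> b"
    and pa: "ptheta h H \<theta> a > 0" and pb: "ptheta h H \<theta> b > 0"
    and da: "(\<lambda>\<theta>'. ptheta h H \<theta>' a) differentiable (at \<theta>)"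
    and db: "(\<lambda>\<theta>'. ptheta h H \<theta>' b) differentiable (at \<theta>)"
  shows "df a (ptheta h H \<theta> a) * partial_deriv (\<lambda>\<theta>'. ptheta h H \<theta>' a) i \<theta> + H i a
       = df b (ptheta h H \<theta> b) * partial_deriv (\<lambda>\<theta>'. ptheta h H \<theta>' b) i \<theta> + H i b"
proof -
  let ?p = "ptheta h H"
  have pP: "?p \<theta> \<in> prob_dists" using vpD[OF th] by (simp add: var_principle_def)
  have s1: "?p \<theta> a + ?p \<theta> b \<le> 1" by (rule pair_le1[OF pP ab])
  have fd: "(f c has_real_derivative df c (?p \<theta> c)) (at (?p \<theta> c))" if "?p \<theta> c \<in> {0<..<1}" for c
  proof -
    have "(f c has_real_derivative df c (?p \<theta> c)) (at (?p \<theta> c) within {0<..<1})"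
      by (rule has_field_derivative_subset[OF f_deriv]) (use that in auto)
    thus ?thesis using that by (simp add: at_within_open[of _ "{0<..<1}"])
  qed
  have fa: "(f a has_real_derivative df a (?p \<theta> a)) (at (?p \<theta> a))" by (rule fd) (use pa pb s1 in auto)
  have fb: "(f b has_real_derivative df b (?p \<theta> b)) (at (?p \<theta> b))" by (rule fd) (use pa pb s1 in auto)
  define L where "L t = f a (?p (\<theta> + t *\<^sub>R axis i 1) a) + ((\<Sum>k\<in>UNIV. \<theta> $ k * H k a) + t * H i a)" for t
  define R where "R t = f b (?p (\<theta> + t *\<^sub>R axis i 1) b) + ((\<Sum>k\<in>UNIV. \<theta> $ k * H k b) + t * H i b)" for t
  have dL: "(L has_real_derivative df a (?p \<theta> a) * partial_deriv (\<lambda>\<theta>'. ?p \<theta>' a) i \<theta> + H i a) (at 0)"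
    unfolding L_def[abs_def]
    using DERIV_chain2[where f="f a", OF _ line_deriv[OF da, of i]] fa
    by (auto intro!: derivative_eq_intros)
  have dR: "(R has_real_derivative df b (?p \<theta> b) * partial_deriv (\<lambda>\<theta>'. ?p \<theta>' b) i \<theta> + H i b) (at 0)"
    unfolding R_def[abs_def]
    using DERIV_chain2[where f="f b", OF _ line_deriv[OF db, of i]] fb
    by (auto intro!: derivative_eq_intros)
  have ev: "eventually (\<lambda>t. L t = R t) (nhds 0)"
    using ev_pos[OF da pa, of i] ev_pos[OF db pb, of i] ev_D0[OF oD th, of i]
  proof eventually_elim
    case (elim t)
    show ?case unfolding L_def R_def dot_shift[symmetric] by (rule kkt[OF h_deriv vpD[OF elim(3)] ab elim(1) elim(2)])
  qed
  have "(R has_real_derivative df a (?p \<theta> a) * partial_deriv (\<lambda>\<theta>'. ?p \<theta>' a) i \<theta> + H i a) (at 0)"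
    using dL DERIV_cong_ev[OF refl ev refl] by simp
  from DERIV_unique[OF this dR] show ?thesis .
qed


theorem mainTheorem10:
  fixes h f df :: "'a::finite \<Rightarrow> real \<Rightarrow> real"
    and H :: "'n::finite \<Rightarrow> 'a \<Rightarrow> real"
    and D0 :: "(real^'n) set"
    and \<theta> :: "real^'n"
  assumes h_cont: "\<And>a. continuous_on {0..1} (h a)"
    and h_conc: "\<And>a. strictly_concave_on {0..1} (h a)"
    and h0: "\<And>a. h a 0 = 0" and h1: "\<And>a. h a 1 = 0"
    and h_deriv: "\<And>a x. x \<in> {0<..<1} \<Longrightarrow> (h a has_real_derivative - f a x) (at x)"
    and f_deriv: "\<And>a x. x \<in> {0<..1} \<Longrightarrow> (f a has_real_derivative df a x) (at x within {0<..1})"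
    and df_pos: "\<And>a x. x \<in> {0<..1} \<Longrightarrow> df a x > 0"
    and D0_open: "open D0" and D0_sub: "D0 \<subseteq> domD h H" and \<theta>_in: "\<theta> \<in> D0"
    and alpha_diff: "alpha h f H differentiable (at \<theta>)"
    and p_diff: "\<And>a. (\<lambda>\<theta>'. ptheta h H \<theta>' a) differentiable (at \<theta>)"
    and p_sum: "\<And>j. (\<Sum>a\<in>UNIV. partial_deriv (\<lambda>\<theta>'. ptheta h H \<theta>' a) j \<theta>) = 0"
    and g_exists: "\<And>i j. metric_g_exists h H \<theta> i j"
  shows "\<forall>i j. fisher h df H \<theta> i j = zfun h df H \<theta> * metric_g h H \<theta> i j
           \<and> zfun h df H \<theta> * metric_g h H \<theta> i j = (zfun h df H \<theta>)\<^sup>2 * covar h df H \<theta> i j"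
proof -
  let ?p = "ptheta h H"
  have vpD: "\<And>\<theta>'. \<theta>' \<in> D0 \<Longrightarrow> var_principle h H \<theta>' (?p \<theta>')"
    using vp_ptheta[of h, OF h_conc] D0_sub by blast
  have pP: "?p \<theta> \<in> prob_dists" using vpD[OF \<theta>_in] by (simp add: var_principle_def)
  define S where "S = {a. ?p \<theta> a > 0}"
  define \<phi> where "\<phi> a = phi df a (?p \<theta> a)" for a
  define D where "D a i = partial_deriv (\<lambda>\<theta>'. ?p \<theta>' a) i \<theta>" for a i
  define z where "z = zfun h df H \<theta>"
  have finS: "finite S" by simp
  have \<phi>pos: "\<phi> a > 0" if "a \<in> S" for a
  proof -
    have "?p \<theta> a \<in> {0<..1}" using that prob_bounds[OF pP, of a] by (auto simp: S_def)
    thus ?thesis using df_pos by (simp add: \<phi>_def phi_def)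
  qed
  have Sne: "S \<noteq> {}"
  proof
    assume "S = {}"
    have "\<forall>a. ?p \<theta> a = 0"
    proof
      fix a have "a \<notin> S" using \<open>S = {}\<close> by simp
      thus "?p \<theta> a = 0" using prob_bounds(1)[OF pP, of a] by (simp add: S_def)
    qed
    thus False using pP by (simp add: prob_dists_def)
  qed
  have z_eq: "z = (\<Sum>a\<in>S. \<phi> a)" by (simp add: z_def zfun_def S_def \<phi>_def)
  have zpos: "z > 0" unfolding z_eq by (rule sum_pos[OF finS Sne \<phi>pos])
  obtain b0 where b0: "b0 \<in> S" using Sne by blast
  define K where "K i = df b0 (?p \<theta> b0) * D b0 i + H i b0" for i
  have Drel: "D a i = \<phi> a * (K i - H i a)" if "a \<in> S" for a i
  proof -
    have "df a (?p \<theta> a) * D a i + H i a = K i"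
    proof (cases "a = b0")
      case True thus ?thesis by (simp add: K_def)
    next
      case False
      show ?thesis unfolding K_def D_def
        by (rule supp_rel[OF h_deriv f_deriv vpD D0_open \<theta>_in False _ _ p_diff p_diff])
           (use that b0 in \<open>auto simp: S_def\<close>)
    qed
    moreover have "df a (?p \<theta> a) > 0" using \<phi>pos[OF that] by (simp add: \<phi>_def phi_def)
    ultimately show ?thesis by (simp add: \<phi>_def phi_def field_simps)
  qed
  have Dzero: "D a i = 0" if "a \<notin> S" for a i
  proof -
    have "?p \<theta> a = 0" using that prob_bounds(1)[OF pP, of a] by (auto simp: S_def)
    from zero_deriv[OF vpD D0_open \<theta>_in this p_diff[of a]] show ?thesis unfolding D_def .
  qed
  have sumS: "(\<Sum>a\<in>UNIV. D a i * X a) = (\<Sum>a\<in>S. \<phi> a * (K i - H i a) * X a)" for i X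
  proof -
    have "(\<Sum>a\<in>UNIV. D a i * X a) = (\<Sum>a\<in>UNIV. if a \<in> S then \<phi> a * (K i - H i a) * X a else 0)"
      by (rule sum.cong) (auto simp: Drel Dzero)
    also have "\<dots> = (\<Sum>a\<in>S. \<phi> a * (K i - H i a) * X a)" by (simp add: sum.inter_restrict[symmetric])
    finally show ?thesis .
  qed
  define A where "A i = (\<Sum>a\<in>S. \<phi> a * H i a)" for i
  define B where "B i j = (\<Sum>a\<in>S. \<phi> a * H i a * H j a)" for i j
  have KA: "K i * z = A i" for i
  proof -
    have "0 = (\<Sum>a\<in>UNIV. D a i * 1)" using p_sum[of i] by (simp add: D_def)
    also have "\<dots> = (\<Sum>a\<in>S. \<phi> a * K i - \<phi> a * H i a)" unfolding sumS by (simp add: algebra_simps)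
    also have "\<dots> = K i * z - A i" by (simp add: sum_subtractf z_eq A_def sum_distrib_left mult.commute)
    finally show ?thesis by simp
  qed
  have esc: "escort h df H \<theta> a = (if a \<in> S then \<phi> a / z else 0)" for a
    by (simp add: escort_def S_def \<phi>_def z_def)
  have pairE: "pairing (escort h df H \<theta>) X = (\<Sum>a\<in>S. \<phi> a * X a) / z" for X
  proof -
    have "pairing (escort h df H \<theta>) X = (\<Sum>a\<in>UNIV. if a \<in> S then \<phi> a * X a / z else 0)"
      unfolding pairing_def by (rule sum.cong) (auto simp: esc)
    also have "\<dots> = (\<Sum>a\<in>S. \<phi> a * X a / z)" by (simp add: sum.inter_restrict[symmetric])
    finally show ?thesis by (simp add: sum_divide_distrib)
  qed
  have cov: "covar h df H \<theta> i j = B i j / z - (A i / z) * (A j / z)" for i j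
    by (simp add: covar_def pairE A_def B_def mult.assoc)
  have escpos: "{a. escort h df H \<theta> a > 0} = S"
    using \<phi>pos zpos by (auto simp: esc split: if_splits)
  have score_eq: "score h df H \<theta> i a = z * (K i - H i a)" if "a \<in> S" for i a
    using that \<phi>pos[OF that] zpos by (simp add: score_def esc D_def[symmetric] Drel)
  have fish: "fisher h df H \<theta> i j = z * (K i * K j * z - K i * A j - K j * A i + B i j)" for i j
  proof -
    have "fisher h df H \<theta> i j = (\<Sum>a\<in>S. z * (\<phi> a * K i * K j - K i * (\<phi> a * H j a) - K j * (\<phi> a * H i a) + \<phi> a * H i a * H j a))"
      unfolding fisher_def escpos
      by (rule sum.cong) (use zpos in \<open>auto simp: esc score_eq field_simps\<close>)
    also have "\<dots> = z * (K i * K j * z - K i * A j - K j * A i + B i j)"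
      by (simp add: sum_distrib_left[symmetric] sum.distrib sum_subtractf z_eq A_def B_def
          sum_distrib_right[symmetric] mult.commute mult.left_commute)
    finally show ?thesis .
  qed
  have metric: "metric_g h H \<theta> i j = - (\<Sum>a\<in>UNIV. D a i * H j a)" for i j
  proof -
    have tl: "filterlim (\<lambda>t::real. \<theta> + t *\<^sub>R axis i 1) (nhds \<theta>) (nhds 0)"
    proof -
      have "((\<lambda>t::real. \<theta> + t *\<^sub>R axis i 1) \<longlongrightarrow> \<theta> + 0 *\<^sub>R axis i 1) (nhds 0)"
        by (intro tendsto_intros filterlim_ident)
      thus ?thesis by simp
    qed
    have ev1: "eventually (\<lambda>t. has_partial (massieu h H) j (\<theta> + t *\<^sub>R axis i 1)) (nhds 0)"
      using g_exists[of i j] unfolding metric_g_exists_def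
      by (intro eventually_compose_filterlim[OF _ tl]) auto
    have ev: "eventually (\<lambda>t. partial_deriv (massieu h H) j (\<theta> + t *\<^sub>R axis i 1)
              = - (\<Sum>a\<in>UNIV. ?p (\<theta> + t *\<^sub>R axis i 1) a * H j a)) (nhds 0)"
      using ev1 ev_D0[OF D0_open \<theta>_in, of i]
    proof eventually_elim
      case (elim t)
      show ?case using envelope[OF vpD D0_open elim(2) elim(1)] by (simp add: pairing_def)
    qed
    have d: "((\<lambda>t. - (\<Sum>a\<in>UNIV. ?p (\<theta> + t *\<^sub>R axis i 1) a * H j a)) has_real_derivative
              - (\<Sum>a\<in>UNIV. D a i * H j a)) (at 0)"
      unfolding D_def
      by (intro derivative_intros DERIV_cmult_right line_deriv p_diff)
    have "((\<lambda>t. partial_deriv (massieu h H) j (\<theta> + t *\<^sub>R axis i 1)) has_real_derivative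
              - (\<Sum>a\<in>UNIV. D a i * H j a)) (at 0)"
      using d DERIV_cong_ev[OF refl ev refl] by simp
    thus ?thesis unfolding metric_g_def partial_deriv_def[of "partial_deriv (massieu h H) j"]
      by (rule DERIV_imp_deriv)
  qed
  have met2: "metric_g h H \<theta> i j = B i j - K i * A j" for i j
  proof -
    have "(\<Sum>a\<in>UNIV. D a i * H j a) = (\<Sum>a\<in>S. K i * (\<phi> a * H j a) - \<phi> a * H i a * H j a)"
      unfolding sumS by (rule sum.cong) (auto simp: algebra_simps)
    also have "\<dots> = K i * A j - B i j" by (simp add: sum_subtractf A_def B_def sum_distrib_left)
    finally show ?thesis using metric by simp
  qed
  show ?thesis
  proof (intro allI conjI)
    fix i j
    have Ki: "K i = A i / z" and Kj: "K j = A j / z" using KA zpos by (simp_all add: field_simps)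
    show "fisher h df H \<theta> i j = zfun h df H \<theta> * metric_g h H \<theta> i j"
      unfolding z_def[symmetric] fish met2 Ki Kj using zpos by (simp add: field_simps)
    show "zfun h df H \<theta> * metric_g h H \<theta> i j = (zfun h df H \<theta>)\<^sup>2 * covar h df H \<theta> i j"
      unfolding z_def[symmetric] cov met2 Ki using zpos by (simp add: field_simps power2_eq_square)
  qed
qed

end
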